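(* Let $0<\alpha\leq 1/2$ and let $\lambda_*(\alpha)$ be as defined below. There exists a non-trivial function $\omega=(\omega_1,\omega_2)$, with $\omega_1$ on $[0,2\pi]$ and $\omega_2$ on $[1,\infty)$, such that $$\left(-i\frac{d}{d\theta} -\alpha\right)^2\omega_1 = \lambda_*(\alpha)\, \omega_1 \text{ on } (0,2\pi),\qquad -\frac{d^2}{dr^2}\omega_2 = \frac{\lambda_*(\alpha)}{r^2}\,\omega_2 \text{ on } (1,\infty),$$ $$\omega_1(0)=\omega_1(2\pi)=\omega_2(1),\qquad \omega_1'(0)-\omega_1'(2\pi)+\omega_2'(1)=0,$$ and moreover: (1) if $0<\alpha<1/2$, then $\omega$ vanishes nowhere on $\Gamma$; if $\alpha=1/2$, then $\omega$ vanishes exactly at the point $(-1,0)\in\Gamma_1$ (i.e. $\theta=\pi$); (2) $\omega_2$ is real-valued, and the function $j:=\operatorname{Re}\overline{\omega_1}\left(-i\frac{d}{d\theta}-\alpha\right)\omega_1$ on $(0,2\pi)$ is constant, equal to $$j= - \sqrt{\lambda_*(\alpha)}\, \frac{\sin(2\pi\alpha)}{\sin(2\pi\sqrt{\lambda_*(\alpha)})};$$ (3) if $0<\alpha<1/2$, then $$\int_0^{2\pi} \frac{d\theta}{|\omega_1(\theta)|^2} = \frac{2\pi\alpha}{\sqrt{\lambda_*(\alpha)}}\, \frac{\sin(2\pi\sqrt{\lambda_*(\alpha)})}{\sin(2\pi\alpha)}.$$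
   Context: $\Gamma=\Gamma_1\cup\Gamma_2$ with $\Gamma_1$ the unit circle in $\mathbb{R}^2$ parametrized by $\theta\mapsto e^{i\theta}$, $\theta\in[0,2\pi]$, and $\Gamma_2=\{(r,0):r>1\}$ parametrized by $r$; $\omega_1,\omega_2$ are the restrictions of $\omega$ to $\Gamma_1,\Gamma_2$ in these parametrizations. For $0<\alpha\le1/2$, $\lambda_*(\alpha)$ is the unique solution $\lambda\in(0,\alpha^2)$ of $\cos(2\pi\alpha)=\cos(2\pi\sqrt\lambda)-\frac{1-\sqrt{1-4\lambda}}{4\sqrt\lambda}\sin(2\pi\sqrt\lambda)$. *)

theory Defs
  imports "HOL-Analysis.Analysis"
begin

definition lambda_eq :: "real \<Rightarrow> real \<Rightarrow> bool" where
  "lambda_eq \<alpha> l \<longleftrightarrow>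
     cos (2*pi*\<alpha>) = cos (2*pi * sqrt l)
        - (1 - sqrt (1 - 4*l)) / (4 * sqrt l) * sin (2*pi * sqrt l)"

definition lambda_star :: "real \<Rightarrow> real" where
  "lambda_star \<alpha> = (THE l. 0 < l \<and> l < \<alpha>\<^sup>2 \<and> lambda_eq \<alpha> l)"

end

theory Submission
  imports Defs "HOL-Analysis.Analysis"
begin


definition hh :: "real \<Rightarrow> real" where "hh m = m / (1 + sqrt (1 - 4*m\<^sup>2))"
definition EE :: "real \<Rightarrow> real \<Rightarrow> real" where
  "EE a m = cos (2*pi*m) - hh m * sin (2*pi*m) - cos (2*pi*a)"

lemma hh_alt:
  assumes "0 < m" "m < 1/2"
  shows "(1 - sqrt (1 - 4*m\<^sup>2)) / (4 * m) = hh m"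
proof -
  have "m*m < (1/2)*(1/2)" using assms by (intro mult_strict_mono) auto
  hence p: "0 \<le> 1 - 4*m\<^sup>2" unfolding power2_eq_square by linarith
  define S where "S = sqrt (1 - 4*m\<^sup>2)"
  have S2: "S\<^sup>2 = 1 - 4*m\<^sup>2" unfolding S_def by (rule real_sqrt_pow2[OF p])
  have S0: "S \<ge> 0" unfolding S_def by (rule real_sqrt_ge_zero[OF p])
  have "(1 - S) / (4*m) = m / (1 + S)" using assms S0 p
    by (simp add: field_simps) (use S2 in \<open>simp add: power2_eq_square algebra_simps\<close>)
  thus ?thesis by (simp add: hh_def S_def)
qed

lemma eq_iff:
  assumes "0 < m" "m < 1/2"
  shows "lambda_eq a (m\<^sup>2) \<longleftrightarrow> EE a m = 0"
  using hh_alt[OF assms] assms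
  by (auto simp: lambda_eq_def EE_def)

lemma hh_mono:
  assumes "0 < m1" "m1 < m2" "m2 < 1/2"
  shows "hh m1 < hh m2"
proof -
  have "sqrt (1 - 4*m2\<^sup>2) < sqrt (1 - 4*m1\<^sup>2)"
    using assms mult_strict_mono[of m1 m2 m1 m2] by (intro real_sqrt_less_mono) (simp add: power2_eq_square)
  moreover have q: "4*m2\<^sup>2 \<le> 1" "4*m1\<^sup>2 \<le> 1" using assms mult_strict_mono[of m2 "1/2" m2 "1/2"] mult_strict_mono[of m1 "1/2" m1 "1/2"] unfolding power2_eq_square by linarith+
  moreover have "0 \<le> sqrt (1 - 4*m2\<^sup>2)" using calculation(2) by simp
  ultimately have "m1 * (1 + sqrt (1 - 4*m2\<^sup>2)) < m2 * (1 + sqrt (1 - 4*m1\<^sup>2))"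
    using assms mult_mono[of m1 m2 "sqrt (1 - 4*m2\<^sup>2)" "sqrt (1 - 4*m1\<^sup>2)"]
    by (simp add: algebra_simps)
  moreover have "0 < 1 + sqrt (1 - 4*m2\<^sup>2)" "0 < 1 + sqrt (1 - 4*m1\<^sup>2)"
    using q by (auto intro: add_pos_nonneg)
  ultimately show ?thesis unfolding hh_def by (simp add: divide_simps)
qed

lemma k_mono:
  assumes "0 < x" "x < y" "y < pi" "\<bar>c\<bar> \<le> 1"
  shows "(cos y - c) * sin x < (cos x - c) * sin y"
proof -
  define f where "f t = (cos t - c) / sin t" for t
  have "f x > f y"
  proof (rule DERIV_neg_imp_decreasing[OF \<open>x<y\<close>])
    fix t assume t: "x \<le> t" "t \<le> y"
    hence st: "sin t > 0" using assms by (intro sin_gt_zero) auto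
    have "DERIV f t :> ((- sin t) * sin t - (cos t - c) * cos t) / (sin t)\<^sup>2"
      unfolding f_def using st by (auto intro!: derivative_eq_intros simp: power2_eq_square)
    moreover have "((- sin t) * sin t - (cos t - c) * cos t) / (sin t)\<^sup>2 < 0"
    proof -
      have ct: "\<bar>cos t\<bar> < 1"
      proof -
        have "cos t < 1" using t assms by (metis cos_monotone_0_pi cos_zero less_eq_real_def order.strict_trans1)
        moreover have "cos t > -1" using t assms by (metis cos_monotone_0_pi cos_pi less_eq_real_def order.strict_trans1 linorder_not_le)
        ultimately show ?thesis by auto
      qed
      have "c * cos t < 1"
      proof -
        have "\<bar>c * cos t\<bar> < 1" using ct assms(4)
          by (simp add: abs_mult) (smt (verit) abs_ge_zero mult_left_le_one_le mult_less_cancel_left1)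
        thus ?thesis by auto
      qed
      hence "(- sin t) * sin t - (cos t - c) * cos t < 0"
        using sin_cos_squared_add[of t] by (simp add: power2_eq_square algebra_simps)
      thus ?thesis using st by (simp add: divide_neg_pos)
    qed
    ultimately show "\<exists>y. DERIV f t :> y \<and> y < 0" by blast
  qed
  moreover have "sin x > 0" "sin y > 0" using assms by (auto intro!: sin_gt_zero)
  ultimately show ?thesis unfolding f_def by (simp add: field_simps)
qed

lemma EE_unique:
  assumes "0 < m1" "m1 < 1/2" "0 < m2" "m2 < 1/2" "EE a m1 = 0" "EE a m2 = 0"
  shows "m1 = m2"
proof (rule ccontr)
  assume ne: "m1 \<noteq> m2"
  have main: False if "0 < p" "p < q" "q < 1/2" "EE a p = 0" "EE a q = 0" for p q
  proof -
    have "(cos (2*pi*q) - cos (2*pi*a)) * sin (2*pi*p) < (cos (2*pi*p) - cos (2*pi*a)) * sin (2*pi*q)"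
      using that by (intro k_mono) auto
    moreover have "cos (2*pi*q) - cos (2*pi*a) = hh q * sin (2*pi*q)"
      "cos (2*pi*p) - cos (2*pi*a) = hh p * sin (2*pi*p)" using that by (auto simp: EE_def)
    ultimately have "hh q * (sin (2*pi*q) * sin (2*pi*p)) < hh p * (sin (2*pi*q) * sin (2*pi*p))"
      by (simp add: algebra_simps)
    moreover have "sin (2*pi*q) > 0" "sin (2*pi*p) > 0" using that by (auto intro!: sin_gt_zero)
    hence "sin (2*pi*q) * sin (2*pi*p) > 0" by simp
    ultimately have "hh q < hh p" by (simp add: mult_less_cancel_right)
    moreover have "hh p < hh q" using that by (intro hh_mono)
    ultimately show False by simp
  qed
  show False
  proof (cases "m1 < m2")
    case True thus False using main[of m1 m2] assms by auto
  next
    case False thus False using main[of m2 m1] assms ne by auto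
  qed
qed

lemma EE_cont: "b \<le> 1/2 \<Longrightarrow> continuous_on {0..b} (EE a)"
proof -
  assume b: "b \<le> 1/2"
  have "1 + sqrt (1 - 4*m\<^sup>2) \<noteq> 0" if "m \<in> {0..b}" for m
  proof -
    have "m*m \<le> (1/2)*(1/2)" using that b by (intro mult_mono) auto
    hence "0 \<le> 1 - 4*m\<^sup>2" unfolding power2_eq_square by linarith
    thus ?thesis by (smt (verit) real_sqrt_ge_zero)
  qed
  thus ?thesis unfolding EE_def hh_def by (intro continuous_intros) auto
qed

lemma EE_0: "0 < a \<Longrightarrow> a \<le> 1/2 \<Longrightarrow> EE a 0 > 0"
proof -
  assume "0 < a" "a \<le> 1/2"
  hence "cos (2*pi*a) < cos 0" by (intro cos_monotone_0_pi) auto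
  thus ?thesis by (simp add: EE_def hh_def)
qed

lemma hh_pos: "0 < m \<Longrightarrow> m \<le> 1/2 \<Longrightarrow> hh m > 0"
proof -
  assume m: "0 < m" "m \<le> 1/2"
  have "m*m \<le> (1/2)*(1/2)" using m by (intro mult_mono) auto
  hence "0 \<le> 1 - 4*m\<^sup>2" unfolding power2_eq_square by linarith
  hence "0 < 1 + sqrt (1 - 4*m\<^sup>2)" by (smt (verit) real_sqrt_ge_zero)
  thus ?thesis using m by (simp add: hh_def)
qed

lemma EE_512: "EE (1/2) (5/12) < 0"
proof -
  have c: "cos (2*pi*(5/12)) = - (sqrt 3 / 2)"
    using cos_pi_minus[of "pi/6"] cos_30 by (simp add: field_simps)
  have s: "sin (2*pi*(5/12)) = 1/2"
    using sin_pi_minus[of "pi/6"] sin_30 by (simp add: field_simps)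
  have s3: "1732/1000 \<le> sqrt 3" by (rule real_le_rsqrt) (simp add: power2_eq_square)
  have "sqrt (1 - 4*(5/12)\<^sup>2) \<le> sqrt ((5528/10000)\<^sup>2)"
    by (subst real_sqrt_le_iff) (simp add: power2_eq_square)
  hence s11: "sqrt (1 - 4*(5/12::real)\<^sup>2) \<le> 5528/10000" by simp
  have "0 \<le> sqrt (1 - 4*(5/12::real)\<^sup>2)" by (simp add: power2_eq_square)
  hence "hh (5/12) \<ge> (5/12) / (1 + 5528/10000)"
    unfolding hh_def using s11 by (intro divide_left_mono) (auto intro: add_pos_nonneg)
  moreover have "EE (1/2) (5/12) = 1 - sqrt 3 / 2 - hh (5/12) / 2"
    unfolding EE_def c s by simp
  ultimately show ?thesis using s3 by simp
qed

lemma lstar: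
  assumes "0 < a" "a \<le> 1/2"
  shows "\<exists>m. 0 < m \<and> m < a \<and> m < 1/2 \<and> EE a m = 0 \<and> lambda_star a = m\<^sup>2"
proof -
  obtain b where b: "0 < b" "b \<le> a" "b < 1/2" "EE a b < 0"
  proof (cases "a < 1/2")
    case True
    have "EE a a < 0" using hh_pos[of a] assms sin_gt_zero[of "2*pi*a"] True
      by (simp add: EE_def)
    thus ?thesis using that[of a] True assms by auto
  next
    case False
    hence a12: "a = 1/2" using assms by auto
    have "EE a (5/12) < 0" using EE_512 unfolding a12 .
    thus ?thesis using that[of "5/12"] a12 by auto
  qed
  obtain m where m: "0 \<le> m" "m \<le> b" "EE a m = 0"
    using IVT2'[of "EE a" b 0 0] b EE_0[OF assms] EE_cont[of b a] by auto
  have m0: "m \<noteq> 0" using m EE_0[OF assms] by auto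
  have mb: "m \<noteq> b" using m b by auto
  have mm: "0 < m" "m < a" "m < 1/2" using m m0 mb b by auto
  have P: "0 < m\<^sup>2 \<and> m\<^sup>2 < a\<^sup>2 \<and> lambda_eq a (m\<^sup>2)"
    using mm eq_iff[of m a] m by (auto intro: power_strict_mono)
  have "lambda_star a = m\<^sup>2" unfolding lambda_star_def
  proof (rule the_equality)
    show "0 < m\<^sup>2 \<and> m\<^sup>2 < a\<^sup>2 \<and> lambda_eq a (m\<^sup>2)" by (rule P)
  next
    fix l assume l: "0 < l \<and> l < a\<^sup>2 \<and> lambda_eq a l"
    define n where "n = sqrt l"
    have ln: "l = n\<^sup>2" using l by (simp add: n_def)
    have n: "0 < n" "n < a" using l assms by (auto simp: n_def real_sqrt_less_iff intro: real_less_lsqrt)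
    have "EE a n = 0" using eq_iff[of n a] l ln n assms by auto
    hence "n = m" using EE_unique[of n m a] n mm m assms by auto
    thus "l = m\<^sup>2" using ln by simp
  qed
  thus ?thesis using mm m by auto
qed



definition Br :: "real \<Rightarrow> real \<Rightarrow> real" where "Br a m = (cos(2*pi*a) - cos(2*pi*m)) / sin(2*pi*m)"
definition Bi :: "real \<Rightarrow> real \<Rightarrow> real" where "Bi a m = - sin(2*pi*a) / sin(2*pi*m)"
definition BB where "BB a m = Complex (Br a m) (Bi a m)"
definition UU :: "real \<Rightarrow> real \<Rightarrow> complex \<Rightarrow> complex" where
  "UU a m z = cos (of_real m * z) + BB a m * sin (of_real m * z)"
definition VV :: "real \<Rightarrow> real \<Rightarrow> complex \<Rightarrow> complex" where
  "VV a m z = of_real m * (- sin (of_real m * z) + BB a m * cos (of_real m * z))"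
definition WW :: "real \<Rightarrow> real \<Rightarrow> complex \<Rightarrow> complex" where
  "WW a m z = exp (\<i> * of_real a * z) * UU a m z"
definition W1 :: "real \<Rightarrow> real \<Rightarrow> complex \<Rightarrow> complex" where
  "W1 a m z = exp (\<i> * of_real a * z) * (\<i> * of_real a * UU a m z + VV a m z)"
definition W2 :: "real \<Rightarrow> real \<Rightarrow> complex \<Rightarrow> complex" where
  "W2 a m z = exp (\<i> * of_real a * z) * ((- (of_real a)\<^sup>2 - (of_real m)\<^sup>2) * UU a m z + 2 * \<i> * of_real a * VV a m z)"

lemma UU_der: "(UU a m has_field_derivative VV a m z) (at z)"
  unfolding UU_def VV_def by (auto intro!: derivative_eq_intros simp: algebra_simps)

lemma VV_der: "(VV a m has_field_derivative - (of_real m)\<^sup>2 * UU a m z) (at z)"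
  unfolding UU_def VV_def by (auto intro!: derivative_eq_intros simp: algebra_simps power2_eq_square)

lemma WW_der: "(WW a m has_field_derivative W1 a m z) (at z)"
  unfolding WW_def W1_def by (auto intro!: derivative_eq_intros UU_der simp: algebra_simps)

lemma W1_der: "(W1 a m has_field_derivative W2 a m z) (at z)"
  unfolding W2_def W1_def by (auto intro!: derivative_eq_intros UU_der VV_der simp: algebra_simps power2_eq_square)

lemma ODE: "- W2 a m z + 2 * \<i> * of_real a * W1 a m z + of_real (a\<^sup>2) * WW a m z = of_real (m\<^sup>2) * WW a m z"
  unfolding W2_def W1_def WW_def by (simp add: algebra_simps power2_eq_square)

lemma UU_real: "UU a m (of_real t) = Complex (cos (m*t) + Br a m * sin (m*t)) (Bi a m * sin (m*t))"
proof -
  have "of_real m * of_real t = (of_real (m*t) :: complex)" by simp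
  thus ?thesis unfolding UU_def BB_def by (simp only: cos_of_real sin_of_real) (simp add: complex_eq_iff)
qed

lemma VV_real: "VV a m (of_real t) = Complex (m * (- sin (m*t) + Br a m * cos (m*t))) (m * Bi a m * cos (m*t))"
proof -
  have "of_real m * of_real t = (of_real (m*t) :: complex)" by simp
  thus ?thesis unfolding VV_def BB_def by (simp only: cos_of_real sin_of_real) (simp add: complex_eq_iff)
qed

lemma exp_real: "exp (\<i> * of_real a * of_real t) = cis (a * t)"
  by (simp add: cis_conv_exp mult.assoc)



locale cstr =
  fixes a m :: real
  assumes a0: "0 < a" and a1: "a \<le> 1/2" and m0: "0 < m" and ma: "m < a" and EE0: "EE a m = 0"
begin

lemma m12: "m < 1/2" using ma a1 by simp

lemma sc: "sin (2*pi*m) > 0" using m0 m12 by (intro sin_gt_zero) auto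

definition "ss = (1 - sqrt (1 - 4*m\<^sup>2)) / 2"

lemma R: "2*m*(cos (2*pi*a) - cos (2*pi*m)) = - ss * sin (2*pi*m)"
proof -
  have "hh m = (1 - sqrt (1 - 4*m\<^sup>2)) / (4 * m)" using hh_alt[OF m0 m12] by simp
  hence "hh m = ss / (2*m)" by (simp add: ss_def)
  with EE0 have "cos (2*pi*a) - cos (2*pi*m) = - ss / (2*m) * sin (2*pi*m)" by (simp add: EE_def)
  thus ?thesis using m0 by (simp add: field_simps)
qed

lemma hBr: "Br a m * sin (2*pi*m) = cos (2*pi*a) - cos (2*pi*m)"
  using sc by (simp add: Br_def)
lemma hBi: "Bi a m * sin (2*pi*m) = - sin (2*pi*a)"
  using sc by (simp add: Bi_def)

lemma UU0: "UU a m 0 = 1" by (simp add: UU_def)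

lemma UU2pi: "UU a m (of_real (2*pi)) = Complex (cos (2*pi*a)) (- sin (2*pi*a))"
  using hBr hBi unfolding UU_real by (simp add: mult.commute)

lemma WW0: "WW a m 0 = 1" by (simp add: WW_def UU0)

lemma WW2pi: "WW a m (of_real (2*pi)) = 1"
proof -
  have "WW a m (of_real (2*pi)) = cis (2*pi*a) * Complex (cos (2*pi*a)) (- sin (2*pi*a))"
    unfolding WW_def UU2pi exp_real by (simp add: mult.commute)
  also have "\<dots> = 1" by (simp add: complex_eq_iff algebra_simps power2_eq_square[symmetric])
  finally show ?thesis .
qed

lemma vertex: "W1 a m 0 - W1 a m (of_real (2*pi)) + of_real ss = 0"
proof -
  define c where "c = 2*pi*m"
  define A where "A = 2*pi*a"
  have W10: "W1 a m 0 = \<i> * of_real a + Complex (m * Br a m) (m * Bi a m)"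
    by (simp add: W1_def UU0 VV_def BB_def complex_eq_iff)
  have W12: "W1 a m (of_real (2*pi)) = cis A * (\<i> * of_real a * Complex (cos A) (- sin A)
       + Complex (m * (- sin c + Br a m * cos c)) (m * Bi a m * cos c))"
    unfolding W1_def UU2pi exp_real VV_real by (simp add: A_def c_def mult.commute)
  have br: "Br a m * sin c = cos A - cos c" and bi: "Bi a m * sin c = - sin A" and sc': "sin c > 0"
    and r: "2*m*(cos A - cos c) = - ss * sin c" using hBr hBi sc R by (auto simp: c_def A_def)
  have sA: "sin A ^ 2 + cos A ^2 = 1" "sin c ^ 2 + cos c ^2 = 1" by simp_all
  have re: "(m * Br a m - (cos A * (m * (- sin c + Br a m * cos c)) - sin A * (m * Bi a m * cos c)) + ss) * sin c = 0"
  proof -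
    have "(m * Br a m - (cos A * (m * (- sin c + Br a m * cos c)) - sin A * (m * Bi a m * cos c)) + ss) * sin c
      = m * (Br a m * sin c) + m * cos A * (sin c)^2 - m * cos A * cos c * (Br a m * sin c) + m * sin A * cos c * (Bi a m * sin c) + ss * sin c"
      by (simp add: algebra_simps power2_eq_square)
    also have "\<dots> = m * (cos A - cos c) + m * cos A * (sin c)^2 - m * cos A * cos c * (cos A - cos c) - m * sin A * cos c * sin A + ss * sin c"
      by (simp add: br bi)
    also have "\<dots> = m * (cos A - cos c) + m * cos A * ((sin c)^2 + (cos c)^2) - m * cos c * ((cos A)^2 + (sin A)^2) + ss * sin c"
      by algebra
    also have "\<dots> = 2*m*(cos A - cos c) + ss * sin c" by (simp add: algebra_simps)
    also have "\<dots> = 0" using r by simp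
    finally show ?thesis .
  qed
  have im: "(m * Bi a m - (cos A * (m * Bi a m * cos c) + sin A * (m * (- sin c + Br a m * cos c)))) * sin c = 0"
  proof -
    have "(m * Bi a m - (cos A * (m * Bi a m * cos c) + sin A * (m * (- sin c + Br a m * cos c)))) * sin c
      = m * (Bi a m * sin c) - m * cos A * cos c * (Bi a m * sin c) + m * sin A * (sin c)^2 - m * sin A * cos c * (Br a m * sin c)"
      by (simp add: algebra_simps power2_eq_square)
    also have "\<dots> = - m * sin A + m * cos A * cos c * sin A + m * sin A * (sin c)^2 - m * sin A * cos c * (cos A - cos c)"
      by (simp add: br bi)
    also have "\<dots> = m * sin A * ((sin c)^2 + (cos c)^2 - 1)"
      by algebra
    also have "\<dots> = 0" by simp
    finally show ?thesis .
  qed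
  have re': "m * Br a m - (cos A * (m * (- sin c + Br a m * cos c)) - sin A * (m * Bi a m * cos c)) + ss = 0"
    using re sc' by simp
  have im': "m * Bi a m - (cos A * (m * Bi a m * cos c) + sin A * (m * (- sin c + Br a m * cos c))) = 0"
    using im sc' by simp
  have sA': "a * (cos A * cos A) + a * (sin A * sin A) = a"
    using sA(1) by (simp add: power2_eq_square algebra_simps flip: distrib_left)
  show ?thesis unfolding W10 W12 using re' im' sA'
    by (simp add: complex_eq_iff algebra_simps)
qed

lemma current:
  "Re (cnj (WW a m (of_real t)) * (- \<i> * W1 a m (of_real t) - of_real a * WW a m (of_real t)))
     = - sqrt (m\<^sup>2) * sin (2*pi*a) / sin (2*pi*m)"
proof -
  define x where "x = a * t"
  define U where "U = UU a m (of_real t)"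
  define V where "V = VV a m (of_real t)"
  have e: "WW a m (of_real t) = cis x * U" "W1 a m (of_real t) = cis x * (\<i> * of_real a * U + V)"
    unfolding WW_def W1_def exp_real x_def U_def V_def by simp_all
  have 1: "- \<i> * (cis x * (\<i> * of_real a * U + V)) - of_real a * (cis x * U) = cis x * (- \<i> * V)"
    by (simp add: algebra_simps)
  have 2: "cnj (cis x * U) * (cis x * (- \<i> * V)) = (cnj (cis x) * cis x) * (cnj U * (- \<i> * V))"
    by (simp add: algebra_simps)
  have 3: "cnj (cis x) * cis x = 1" by (simp add: cis_cnj cis_mult)
  have sq: "cos (m*t) * cos (m*t) + sin (m*t) * sin (m*t) = 1"
    using sin_cos_squared_add[of "m*t"] by (simp add: power2_eq_square)
  have "Re (cnj U * (- \<i> * V)) = m * Bi a m"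
    unfolding U_def V_def UU_real VV_real apply (simp add: algebra_simps)
    by (metis sq distrib_left mult.assoc mult_1_right)
  thus ?thesis unfolding e 1 2 3 using m0 by (simp add: Bi_def)
qed

lemma WW_norm: "cmod (WW a m (of_real t)) = cmod (UU a m (of_real t))"
  unfolding WW_def exp_real by (simp add: norm_mult)

lemma Bi_neg: "a < 1/2 \<Longrightarrow> Bi a m < 0"
proof -
  assume "a < 1/2"
  hence "sin (2*pi*a) > 0" using a0 by (intro sin_gt_zero) auto
  thus ?thesis using sc by (simp add: Bi_def)
qed

lemma Im_pos: "a < 1/2 \<Longrightarrow> 0 < t \<Longrightarrow> t \<le> 2*pi \<Longrightarrow> Im (UU a m (of_real t)) < 0"
proof -
  assume h: "a < 1/2" "0 < t" "t \<le> 2*pi"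
  have "m * t \<le> m * (2*pi)" using h m0 by (intro mult_left_mono) auto
  moreover have "m * (2*pi) < pi" using m12 by simp
  ultimately have "m*t < pi" by linarith
  hence "sin (m*t) > 0" using h m0 by (intro sin_gt_zero) auto
  thus ?thesis using Bi_neg h unfolding UU_real by (simp add: mult_neg_pos)
qed

lemma nozero_lt: "a < 1/2 \<Longrightarrow> t \<in> {0..2*pi} \<Longrightarrow> UU a m (of_real t) \<noteq> 0"
proof -
  assume h: "a < 1/2" "t \<in> {0..2*pi}"
  show ?thesis
  proof (cases "t = 0")
    case True thus ?thesis using UU0 by simp
  next
    case False thus ?thesis using Im_pos[of t] h by force
  qed
qed

lemma zero_half: "a = 1/2 \<Longrightarrow> t \<in> {0..2*pi} \<Longrightarrow> UU a m (of_real t) = 0 \<longleftrightarrow> t = pi"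
proof -
  assume h: "a = 1/2" "t \<in> {0..2*pi}"
  define hm where "hm = pi * m"
  have hm: "0 < hm" "hm < pi/2" using m0 m12 by (auto simp: hm_def)
  have ch: "cos hm > 0" using hm by (intro cos_gt_zero) auto
  have sh: "sin hm > 0" using hm by (intro sin_gt_zero) auto
  have c2: "2*pi*m = 2 * hm" by (simp add: hm_def)
  have api: "2*pi*a = pi" using h by simp
  have s0: "sin (2*pi*a) = 0" unfolding api by simp
  have cA: "cos (2*pi*a) = -1" unfolding api by simp
  have "Bi a m = 0" unfolding Bi_def s0 by simp
  moreover have "Br a m = - cos hm / sin hm"
  proof -
    have "Br a m = (-1 - (2 * cos hm ^ 2 - 1)) / (2 * sin hm * cos hm)"
      unfolding Br_def c2 cos_double_cos sin_double cA ..
    also have "\<dots> = - cos hm / sin hm" using ch sh by (simp add: field_simps power2_eq_square)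
    finally show ?thesis .
  qed
  ultimately have U: "UU a m (of_real t) = Complex (cos (m*t) - cos hm / sin hm * sin (m*t)) 0"
    unfolding UU_real by simp
  have "(cos (m*t) - cos hm / sin hm * sin (m*t)) * sin hm = sin (hm - m*t)"
    using sh by (simp add: sin_diff field_simps)
  hence "UU a m (of_real t) = 0 \<longleftrightarrow> sin (hm - m*t) = 0" using sh unfolding U
    by (auto simp: complex_eq_iff)
  also have "\<dots> \<longleftrightarrow> hm - m*t = 0"
  proof
    assume "sin (hm - m*t) = 0"
    moreover have "m * t \<le> m * (2*pi)" using h m0 by (intro mult_left_mono) auto
    moreover have "0 \<le> m * t" using h m0 by auto
    moreover have "m * (2*pi) = 2 * hm" by (simp add: hm_def)
    ultimately have "-pi < hm - m*t" "hm - m*t < pi" using hm by linarith+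
    thus "hm - m*t = 0" using \<open>sin (hm - m*t) = 0\<close> by (rule sin_eq_0_pi)
  qed simp
  also have "\<dots> \<longleftrightarrow> t = pi" using m0 by (auto simp: hm_def)
  finally show ?thesis .
qed

lemma integral:
  assumes "a < 1/2"
  shows "((\<lambda>t. 1 / (cmod (WW a m (of_real t)))\<^sup>2) has_integral
          (2*pi*a / sqrt (m\<^sup>2) * (sin (2*pi*m) / sin (2*pi*a)))) {0..2*pi}"
proof -
  define U where "U t = UU a m (of_real t)" for t
  define V where "V t = VV a m (of_real t)" for t
  have nr: "U t \<notin> \<real>\<^sub>\<le>\<^sub>0" if "t \<in> {0..2*pi}" for t
  proof (cases "t = 0")
    case True thus ?thesis by (simp add: U_def UU0 complex_nonpos_Reals_iff)
  next
    case False thus ?thesis using Im_pos[of t] that assms by (auto simp: U_def complex_nonpos_Reals_iff)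
  qed
  have der: "((\<lambda>t. Ln (U t)) has_vector_derivative (inverse (U t) * V t)) (at t within {0..2*pi})"
    if "t \<in> {0..2*pi}" for t
  proof -
    have "((\<lambda>z. Ln (UU a m z)) has_field_derivative (inverse (UU a m (of_real t)) * VV a m (of_real t))) (at (of_real t))"
      using nr[OF that] unfolding U_def
      by (auto intro!: DERIV_chain2[OF has_field_derivative_Ln] UU_der)
    thus ?thesis unfolding U_def V_def by (rule has_vector_derivative_real_field)
  qed
  have I: "((\<lambda>t. inverse (U t) * V t) has_integral (Ln (U (2*pi)) - Ln (U 0))) {0..2*pi}"
    by (rule fundamental_theorem_of_calculus) (use der in auto)
  define A where "A = 2*pi*a"
  have A: "0 < A" "A < pi" using a0 assms by (auto simp: A_def)
  have "exp (\<i> * of_real (- A)) = cis (- A)" by (simp add: cis_conv_exp)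
  moreover have "U (2*pi) = cis (- A)"
    unfolding U_def UU2pi by (simp add: complex_eq_iff A_def)
  ultimately have U2: "U (2*pi) = exp (\<i> * of_real (- A))" by simp
  have L2: "Ln (U (2*pi)) = \<i> * of_real (- A)" unfolding U2 using A by (subst Ln_exp) auto
  have L0: "Ln (U 0) = 0" by (simp add: U_def UU0)
  have I2: "((\<lambda>t. Im (inverse (U t) * V t)) has_integral (- A)) {0..2*pi}"
    using has_integral_Im[OF I] unfolding L2 L0 by simp
  have imv: "Im (inverse (U t) * V t) = m * Bi a m / (cmod (U t))\<^sup>2" for t
  proof -
    have sq: "cos (m*t) * cos (m*t) + sin (m*t) * sin (m*t) = 1"
      using sin_cos_squared_add[of "m*t"] by (simp add: power2_eq_square)
    have n0: "Re (U t) * Im (V t) - Im (U t) * Re (V t) = m * Bi a m"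
      unfolding U_def V_def UU_real VV_real apply (simp add: algebra_simps)
      by (metis sq distrib_left mult.assoc mult_1_right)
    have n: "Im (V t) * Re (U t) - Re (V t) * Im (U t) = m * Bi a m" using n0 by (simp add: algebra_simps)
    have ie: "inverse (U t) * V t = V t / U t" by (simp add: divide_inverse mult.commute)
    show ?thesis unfolding ie Im_divide' n by (rule refl)
  qed
  have mb: "m * Bi a m \<noteq> 0" using Bi_neg assms m0 by force
  have I3: "((\<lambda>t. (1 / (m * Bi a m)) * Im (inverse (U t) * V t)) has_integral ((1 / (m * Bi a m)) * (- A))) {0..2*pi}"
    by (rule has_integral_mult_right[OF I2])
  have eqf: "(1 / (m * Bi a m)) * Im (inverse (U t) * V t) = 1 / (cmod (WW a m (of_real t)))\<^sup>2" for t
  proof -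
    have "(1 / (m * Bi a m)) * Im (inverse (U t) * V t) = 1 / (cmod (U t))\<^sup>2"
      unfolding imv using mb by simp
    thus ?thesis unfolding WW_norm U_def .
  qed
  have val: "(1 / (m * Bi a m)) * (- A) = 2*pi*a / sqrt (m\<^sup>2) * (sin (2*pi*m) / sin (2*pi*a))"
    using m0 sc A by (simp add: Bi_def A_def field_simps)
  show ?thesis using I3 unfolding eqf val .
qed

end


context cstr begin

lemma ss_eq: "ss * (ss - 1) = - m\<^sup>2"
proof -
  have "m*m < (1/2)*(1/2)" using m0 m12 by (intro mult_strict_mono) auto
  hence p: "0 \<le> 1 - 4*m\<^sup>2" unfolding power2_eq_square by linarith
  have S2: "(sqrt (1 - 4*m\<^sup>2))\<^sup>2 = 1 - 4*m\<^sup>2" by (rule real_sqrt_pow2[OF p])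
  show ?thesis unfolding ss_def using S2 by (simp add: field_simps power2_eq_square)
qed

lemma om2_der: "r \<ge> 1 \<Longrightarrow> ((\<lambda>r. of_real (r powr ss) :: complex) has_vector_derivative of_real (ss * r powr (ss - 1))) (at r within X)"
  by (auto intro!: derivative_eq_intros)

lemma e1_der: "r > 1 \<Longrightarrow> ((\<lambda>r. of_real (ss * r powr (ss - 1)) :: complex) has_vector_derivative of_real (ss * (ss - 1) * r powr (ss - 2))) (at r)"
  by (auto intro!: derivative_eq_intros simp: algebra_simps)

lemma ode2: "r > 1 \<Longrightarrow> - (of_real (ss * (ss - 1) * r powr (ss - 2)) :: complex) = of_real (m\<^sup>2 / r\<^sup>2) * of_real (r powr ss)"
proof -
  assume r: "r > 1"
  have "r powr (ss - 2) = r powr ss / r\<^sup>2" using r by (simp add: powr_diff powr_numeral)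
  hence "- (ss * (ss - 1) * r powr (ss - 2)) = m\<^sup>2 / r\<^sup>2 * r powr ss" using ss_eq by simp
  thus ?thesis by (metis of_real_minus of_real_mult)
qed

end



theorem lemma4p3:
  fixes \<alpha> :: real
  assumes "0 < \<alpha>" and "\<alpha> \<le> 1/2"
  shows "\<exists>(\<omega>1 :: real \<Rightarrow> complex) d1 d2 (\<omega>2 :: real \<Rightarrow> complex) e1 e2.
    let lam = lambda_star \<alpha> in
    \<comment> \<open>regularity: omega1 is C^1 up to the endpoints, twice differentiable inside\<close>
    (\<forall>\<theta>\<in>{0..2*pi}. (\<omega>1 has_vector_derivative d1 \<theta>) (at \<theta> within {0..2*pi})) \<and>
    (\<forall>\<theta>\<in>{0<..<2*pi}. (d1 has_vector_derivative d2 \<theta>) (at \<theta>)) \<and>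
    (\<forall>r\<in>{1..}. (\<omega>2 has_vector_derivative e1 r) (at r within {1..})) \<and>
    (\<forall>r\<in>{1<..}. (e1 has_vector_derivative e2 r) (at r)) \<and>
    \<comment> \<open>non-trivial\<close>
    ((\<exists>\<theta>\<in>{0..2*pi}. \<omega>1 \<theta> \<noteq> 0) \<or> (\<exists>r\<in>{1..}. \<omega>2 r \<noteq> 0)) \<and>
    \<comment> \<open>(-i d/d theta - alpha)^2 omega1 = lambda omega1 on (0, 2 pi)\<close>
    (\<forall>\<theta>\<in>{0<..<2*pi}. - d2 \<theta> + 2 * \<i> * of_real \<alpha> * d1 \<theta> + of_real (\<alpha>\<^sup>2) * \<omega>1 \<theta>
        = of_real lam * \<omega>1 \<theta>) \<and>
    \<comment> \<open>- omega2'' = lambda / r^2 omega2 on (1, infinity)\<close>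
    (\<forall>r\<in>{1<..}. - e2 r = of_real (lam / r\<^sup>2) * \<omega>2 r) \<and>
    \<comment> \<open>vertex conditions\<close>
    \<omega>1 0 = \<omega>1 (2*pi) \<and> \<omega>1 (2*pi) = \<omega>2 1 \<and>
    d1 0 - d1 (2*pi) + e1 1 = 0 \<and>
    \<comment> \<open>(1) zeros\<close>
    (\<alpha> < 1/2 \<longrightarrow> (\<forall>\<theta>\<in>{0..2*pi}. \<omega>1 \<theta> \<noteq> 0) \<and> (\<forall>r\<in>{1<..}. \<omega>2 r \<noteq> 0)) \<and>
    (\<alpha> = 1/2 \<longrightarrow> {\<theta>\<in>{0..2*pi}. \<omega>1 \<theta> = 0} = {pi} \<and> (\<forall>r\<in>{1<..}. \<omega>2 r \<noteq> 0)) \<and>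
    \<comment> \<open>(2) omega2 real-valued, current j constant\<close>
    (\<forall>r\<in>{1..}. Im (\<omega>2 r) = 0) \<and>
    (\<forall>\<theta>\<in>{0<..<2*pi}.
        Re (cnj (\<omega>1 \<theta>) * (- \<i> * d1 \<theta> - of_real \<alpha> * \<omega>1 \<theta>))
        = - sqrt lam * sin (2*pi*\<alpha>) / sin (2*pi * sqrt lam)) \<and>
    \<comment> \<open>(3) integral identity\<close>
    (\<alpha> < 1/2 \<longrightarrow>
       ((\<lambda>\<theta>. 1 / (cmod (\<omega>1 \<theta>))\<^sup>2) has_integral
          (2*pi*\<alpha> / sqrt lam * (sin (2*pi * sqrt lam) / sin (2*pi*\<alpha>)))) {0..2*pi})"
proof -
  obtain m where m: "0 < m" "m < \<alpha>" "m < 1/2" "EE \<alpha> m = 0" "lambda_star \<alpha> = m\<^sup>2"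
    using lstar[OF assms] by blast
  interpret cstr \<alpha> m using assms m by unfold_locales auto
  have sq: "sqrt (m\<^sup>2) = m" using m by simp
  define om1 where "om1 \<theta> = WW \<alpha> m (of_real \<theta>)" for \<theta>
  define d1 where "d1 \<theta> = W1 \<alpha> m (of_real \<theta>)" for \<theta>
  define d2 where "d2 \<theta> = W2 \<alpha> m (of_real \<theta>)" for \<theta>
  define om2 where "om2 r = (of_real (r powr ss) :: complex)" for r
  define e1 where "e1 r = (of_real (ss * r powr (ss - 1)) :: complex)" for r
  define e2 where "e2 r = (of_real (ss * (ss - 1) * r powr (ss - 2)) :: complex)" for r
  have R1: "\<forall>\<theta>\<in>{0..2*pi}. (om1 has_vector_derivative d1 \<theta>) (at \<theta> within {0..2*pi})"
    unfolding om1_def d1_def by (auto intro!: has_vector_derivative_real_field WW_der)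
  have R2: "\<forall>\<theta>\<in>{0<..<2*pi}. (d1 has_vector_derivative d2 \<theta>) (at \<theta>)"
    unfolding d2_def d1_def by (auto intro!: has_vector_derivative_real_field W1_der)
  have R3: "\<forall>r\<in>{1..}. (om2 has_vector_derivative e1 r) (at r within {1..})"
    unfolding om2_def e1_def using om2_der by auto
  have R4: "\<forall>r\<in>{1<..}. (e1 has_vector_derivative e2 r) (at r)"
    unfolding e2_def e1_def using e1_der by auto
  have NT: "(\<exists>\<theta>\<in>{0..2*pi}. om1 \<theta> \<noteq> 0) \<or> (\<exists>r\<in>{1..}. om2 r \<noteq> 0)"
    using WW0 by (auto simp: om1_def intro!: bexI[of _ 0])
  have O1: "\<forall>\<theta>\<in>{0<..<2*pi}. - d2 \<theta> + 2 * \<i> * of_real \<alpha> * d1 \<theta> + of_real (\<alpha>\<^sup>2) * om1 \<theta>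
        = of_real (m\<^sup>2) * om1 \<theta>"
    unfolding om1_def d1_def d2_def using ODE by blast
  have O2: "\<forall>r\<in>{1<..}. - e2 r = of_real (m\<^sup>2 / r\<^sup>2) * om2 r"
    unfolding e2_def om2_def using ode2 by auto
  have V1: "om1 0 = om1 (2*pi)" "om1 (2*pi) = om2 1"
    using WW0 WW2pi by (auto simp: om1_def om2_def)
  have V2: "d1 0 - d1 (2*pi) + e1 1 = 0"
    using vertex by (simp add: d1_def e1_def)
  have Z1: "\<alpha> < 1/2 \<longrightarrow> (\<forall>\<theta>\<in>{0..2*pi}. om1 \<theta> \<noteq> 0) \<and> (\<forall>r\<in>{1<..}. om2 r \<noteq> 0)"
    using nozero_lt by (auto simp: om1_def om2_def WW_def)
  have Z2: "\<alpha> = 1/2 \<longrightarrow> {\<theta>\<in>{0..2*pi}. om1 \<theta> = 0} = {pi} \<and> (\<forall>r\<in>{1<..}. om2 r \<noteq> 0)"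
    using zero_half by (auto simp: om1_def om2_def WW_def)
  have IM: "\<forall>r\<in>{1..}. Im (om2 r) = 0" by (simp add: om2_def)
  have CU: "\<forall>\<theta>\<in>{0<..<2*pi}.
        Re (cnj (om1 \<theta>) * (- \<i> * d1 \<theta> - of_real \<alpha> * om1 \<theta>))
        = - sqrt (m\<^sup>2) * sin (2*pi*\<alpha>) / sin (2*pi * sqrt (m\<^sup>2))"
    using current unfolding om1_def d1_def sq by simp
  have IN: "\<alpha> < 1/2 \<longrightarrow>
       ((\<lambda>\<theta>. 1 / (cmod (om1 \<theta>))\<^sup>2) has_integral
          (2*pi*\<alpha> / sqrt (m\<^sup>2) * (sin (2*pi * sqrt (m\<^sup>2)) / sin (2*pi*\<alpha>)))) {0..2*pi}"
    using integral unfolding om1_def sq by simp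
  show ?thesis unfolding Let_def m(5)
    apply (rule exI[of _ om1], rule exI[of _ d1], rule exI[of _ d2], rule exI[of _ om2], rule exI[of _ e1], rule exI[of _ e2])
    using R1 R2 R3 R4 NT O1 O2 V1 V2 Z1 Z2 IM CU IN by blast
qed


end
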